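(* Let $M_n$ be endowed with any norm, let $\phi: M_n\to M_n$ be a linear map that is contractive with respect to this norm, and let $\psi$ be an idempotent map ($\psi\circ\psi=\psi$) that is a limit point of the sequence of iterates $(\phi^k)_{k\ge1}$. Then \[ \lim_{k\to\infty}\|\phi^k-\phi^k\circ\psi\| = 0. \]
   Context: $M_n$ denotes the $n\times n$ complex matrices; $\phi^k$ is the $k$-fold composition of $\phi$ with itself; $\|\cdot\|$ is any norm on the space of linear maps $M_n\to M_n$. *)

theory Defs
  imports "HOL-Analysis.Analysis"
begin

text \<open>M_n is modelled as the type complex^'n^'n of n x n complex matrices
  (n = CARD('n) arbitrary but fixed).\<close>

type_synonym 'n mat = "complex ^ 'n ^ 'n"

definition cscale :: "complex \<Rightarrow> ('n::finite) mat \<Rightarrow> ('n::finite) mat" where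
  "cscale c A = (\<chi> i j. c * A $ i $ j)"

definition mat_linear :: "(('n::finite) mat \<Rightarrow> ('n::finite) mat) \<Rightarrow> bool" where
  "mat_linear f \<longleftrightarrow> (\<forall>A B. f (A + B) = f A + f B) \<and> (\<forall>c A. f (cscale c A) = cscale c (f A))"

definition is_mat_norm :: "(('n::finite) mat \<Rightarrow> real) \<Rightarrow> bool" where
  "is_mat_norm N \<longleftrightarrow>
     (\<forall>A. 0 \<le> N A) \<and> (\<forall>A. N A = 0 \<longleftrightarrow> A = 0) \<and>
     (\<forall>A B. N (A + B) \<le> N A + N B) \<and> (\<forall>c A. N (cscale c A) = cmod c * N A)"

definition is_map_norm :: "((('n::finite) mat \<Rightarrow> ('n::finite) mat) \<Rightarrow> real) \<Rightarrow> bool" where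
  "is_map_norm M \<longleftrightarrow>
     (\<forall>T. mat_linear T \<longrightarrow> 0 \<le> M T) \<and>
     (\<forall>T. mat_linear T \<longrightarrow> (M T = 0 \<longleftrightarrow> T = (\<lambda>_. 0))) \<and>
     (\<forall>S T. mat_linear S \<longrightarrow> mat_linear T \<longrightarrow> M (\<lambda>A. S A + T A) \<le> M S + M T) \<and>
     (\<forall>c T. mat_linear T \<longrightarrow> M (\<lambda>A. cscale c (T A)) = cmod c * M T)"

definition contractive :: "(('n::finite) mat \<Rightarrow> real) \<Rightarrow> (('n::finite) mat \<Rightarrow> ('n::finite) mat) \<Rightarrow> bool" where
  "contractive N f \<longleftrightarrow> (\<forall>A. N (f A) \<le> N A)"

text \<open>psi is a limit point (subsequential limit) of the iterates (phi^k)_{k>=1},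
  convergence taken in the topology induced by N (pointwise; on the finite-dimensional
  space of maps this is the norm topology).\<close>
definition iterate_limit_point :: "(('n::finite) mat \<Rightarrow> real) \<Rightarrow> (('n::finite) mat \<Rightarrow> ('n::finite) mat) \<Rightarrow> (('n::finite) mat \<Rightarrow> ('n::finite) mat) \<Rightarrow> bool" where
  "iterate_limit_point N f g \<longleftrightarrow>
     (\<exists>r::nat \<Rightarrow> nat. strict_mono r \<and> (\<forall>j. 1 \<le> r j) \<and>
        (\<forall>A. (\<lambda>j. N ((f ^^ r j) A - g A)) \<longlonglongrightarrow> 0))"

end

theory Submission
  imports Defs
begin

lemma cs_add_left: "cscale (x+y) A = cscale x A + cscale y A"
  by (simp add: cscale_def vec_eq_iff algebra_simps)
lemma cs_add_right: "cscale c (A+B) = cscale c A + cscale c B"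
  by (simp add: cscale_def vec_eq_iff algebra_simps)
lemma cs_diff_right: "cscale c (A-B) = cscale c A - cscale c B"
  by (simp add: cscale_def vec_eq_iff algebra_simps)
lemma cs_mult: "cscale (x*y) A = cscale x (cscale y A)"
  by (simp add: cscale_def vec_eq_iff algebra_simps)
lemma cs_zero_right[simp]: "cscale c 0 = 0"
  by (simp add: cscale_def vec_eq_iff)
lemma cs_zero_left[simp]: "cscale 0 A = 0"
  by (simp add: cscale_def vec_eq_iff)
lemma cs_one[simp]: "cscale 1 A = A"
  by (simp add: cscale_def vec_eq_iff)
lemma cs_minus: "cscale (-1) A = - A"
  by (simp add: cscale_def vec_eq_iff)
lemma cs_real: "t *\<^sub>R A = cscale (complex_of_real t) A"
  unfolding cscale_def vec_eq_iff by (simp add: scaleR_conv_of_real[where 'a=complex])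
lemma cs_sum_right: "cscale c (\<Sum>i\<in>S. f i) = (\<Sum>i\<in>S. cscale c (f i))"
  by (induction S rule: infinite_finite_induct) (auto simp: cs_add_right)

lemma ml_zero: "mat_linear f \<Longrightarrow> f 0 = 0"
  unfolding mat_linear_def by (metis add_cancel_right_right)
lemma ml_add: "mat_linear f \<Longrightarrow> f (A + B) = f A + f B"
  unfolding mat_linear_def by blast
lemma ml_cs: "mat_linear f \<Longrightarrow> f (cscale c A) = cscale c (f A)"
  unfolding mat_linear_def by blast
lemma ml_neg: "mat_linear f \<Longrightarrow> f (- A) = - f A"
proof -
  assume f: "mat_linear f"
  have "f (- A) = f (cscale (-1) A)" by (simp add: cs_minus)
  also have "\<dots> = cscale (-1) (f A)" by (rule ml_cs[OF f])
  finally show ?thesis by (simp add: cs_minus)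
qed
lemma ml_diff: "mat_linear f \<Longrightarrow> f (A - B) = f A - f B"
  by (metis diff_conv_add_uminus ml_add ml_neg)
lemma ml_sum: assumes f: "mat_linear f" shows "f (\<Sum>i\<in>S. g i) = (\<Sum>i\<in>S. f (g i))"
  by (induction S rule: infinite_finite_induct) (auto simp: ml_zero[OF f] ml_add[OF f])
lemma ml_comp: "mat_linear f \<Longrightarrow> mat_linear g \<Longrightarrow> mat_linear (f \<circ> g)"
  unfolding mat_linear_def by simp
lemma ml_pow: "mat_linear f \<Longrightarrow> mat_linear (f ^^ n)"
  by (induction n) (auto simp: ml_comp, auto simp: mat_linear_def)
lemma ml_const0: "mat_linear (\<lambda>_. 0)"
  unfolding mat_linear_def by simp
lemma ml_addf: "mat_linear f \<Longrightarrow> mat_linear g \<Longrightarrow> mat_linear (\<lambda>A. f A + g A)"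
  unfolding mat_linear_def by (simp add: cs_add_right algebra_simps)
lemma ml_difff: "mat_linear f \<Longrightarrow> mat_linear g \<Longrightarrow> mat_linear (\<lambda>A. f A - g A)"
  unfolding mat_linear_def by (simp add: cs_diff_right algebra_simps)
lemma ml_csf: "mat_linear f \<Longrightarrow> mat_linear (\<lambda>A. cscale c (f A))"
  unfolding mat_linear_def by (simp add: cs_add_right flip: cs_mult) (simp add: mult.commute)
lemma ml_sumf: "(\<And>i. i \<in> S \<Longrightarrow> mat_linear (F i)) \<Longrightarrow> mat_linear (\<lambda>A. \<Sum>i\<in>S. F i A)"
proof (induction S rule: infinite_finite_induct)
  case (insert x F)
  then show ?case by (simp add: ml_addf)
qed (auto simp: ml_const0)

lemma N_0: "is_mat_norm N \<Longrightarrow> N 0 = 0"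
  unfolding is_mat_norm_def by blast
lemma N_ge: "is_mat_norm N \<Longrightarrow> 0 \<le> N A"
  unfolding is_mat_norm_def by blast
lemma N_tri: "is_mat_norm N \<Longrightarrow> N (A + B) \<le> N A + N B"
  unfolding is_mat_norm_def by blast
lemma N_cs: "is_mat_norm N \<Longrightarrow> N (cscale c A) = cmod c * N A"
  unfolding is_mat_norm_def by blast
lemma N_neg: "is_mat_norm N \<Longrightarrow> N (- A) = N A"
  using N_cs[of N "-1" A] by (simp add: cs_minus)
lemma N_commute: "is_mat_norm N \<Longrightarrow> N (A - B) = N (B - A)"
  using N_neg[of N "B - A"] by simp
lemma N_tri2: "is_mat_norm N \<Longrightarrow> N (A - B) \<le> N (A - C) + N (C - B)"
  using N_tri[of N "A - C" "C - B"] by simp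
lemma N_sum: "is_mat_norm N \<Longrightarrow> N (\<Sum>i\<in>S. f i) \<le> (\<Sum>i\<in>S. N (f i))"
proof (induction S rule: infinite_finite_induct)
  case (insert x F)
  then show ?case using N_tri[OF insert(4), of "f x" "sum f F"] by simp
qed (auto simp: N_0)

lemma M_0: "is_map_norm M \<Longrightarrow> M (\<lambda>_. 0) = 0"
  unfolding is_map_norm_def using ml_const0 by blast
lemma M_ge: "is_map_norm M \<Longrightarrow> mat_linear T \<Longrightarrow> 0 \<le> M T"
  unfolding is_map_norm_def by blast
lemma M_cs: "is_map_norm M \<Longrightarrow> mat_linear T \<Longrightarrow> M (\<lambda>A. cscale c (T A)) = cmod c * M T"
  unfolding is_map_norm_def by blast
lemma M_tri: "is_map_norm M \<Longrightarrow> mat_linear S \<Longrightarrow> mat_linear T \<Longrightarrow> M (\<lambda>A. S A + T A) \<le> M S + M T"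
  unfolding is_map_norm_def by blast
lemma M_sum:
  assumes MN: "is_map_norm M"
  shows "(\<And>i. i \<in> S \<Longrightarrow> mat_linear (F i)) \<Longrightarrow>
   M (\<lambda>A. \<Sum>i\<in>S. F i A) \<le> (\<Sum>i\<in>S. M (F i))"
proof (induction S rule: infinite_finite_induct)
  case (infinite S)
  then show ?case by (simp only: sum.infinite[OF infinite(1)] M_0[OF MN] order_refl)
next
  case empty
  then show ?case using M_0[OF MN] by simp
next
  case (insert x S)
  have l1: "mat_linear (F x)" using insert.prems by simp
  have l2: "mat_linear (\<lambda>A. \<Sum>i\<in>S. F i A)" using insert.prems by (intro ml_sumf) simp
  have "M (\<lambda>A. \<Sum>i\<in>insert x S. F i A) = M (\<lambda>A. F x A + (\<Sum>i\<in>S. F i A))"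
    using insert(1,2) by simp
  also have "\<dots> \<le> M (F x) + M (\<lambda>A. \<Sum>i\<in>S. F i A)"
    by (rule M_tri[OF MN l1 l2])
  also have "\<dots> \<le> M (F x) + (\<Sum>i\<in>S. M (F i))"
  proof -
    have "M (\<lambda>A. \<Sum>i\<in>S. F i A) \<le> (\<Sum>i\<in>S. M (F i))"
      by (rule insert.IH) (rule insert.prems, simp)
    then show ?thesis by linarith
  qed
  also have "\<dots> = (\<Sum>i\<in>insert x S. M (F i))" using insert(1,2) by (rule sum.insert[symmetric])
  finally show ?case .
qed

lemma squeeze0:
  fixes f g :: "nat \<Rightarrow> real"
  assumes "\<And>n. 0 \<le> f n" "\<And>n. f n \<le> g n" "g \<longlonglongrightarrow> 0"
  shows "f \<longlonglongrightarrow> 0"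
  by (rule tendsto_sandwich[where f="\<lambda>_. 0" and h=g]) (use assms in auto)

definition Eb :: "'n::finite \<Rightarrow> 'n \<Rightarrow> 'n mat" where
  "Eb c d = (\<chi> i j. if j = d then (if i = c then 1 else 0) else 0)"

lemma mat_decomp: "(X::'n::finite mat) = (\<Sum>c\<in>UNIV. \<Sum>d\<in>UNIV. cscale (X$c$d) (Eb c d))"
  by (simp add: vec_eq_iff cscale_def Eb_def if_distrib[of "\<lambda>x. _ * x"] cong: if_cong)

lemma coord_le: "cmod ((X::'n::finite mat) $ c $ d) \<le> norm X"
  using Finite_Cartesian_Product.norm_nth_le[of "X $ c" d] Finite_Cartesian_Product.norm_nth_le[of X c] by linarith

lemma N_upper:
  assumes NN: "is_mat_norm N"
  shows "N X \<le> (\<Sum>c\<in>UNIV. \<Sum>d\<in>UNIV. N (Eb c d)) * norm X"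
proof -
  have "N X = N (\<Sum>c\<in>UNIV. \<Sum>d\<in>UNIV. cscale (X$c$d) (Eb c d))"
    using mat_decomp[of X] by simp
  also have "\<dots> \<le> (\<Sum>c\<in>UNIV. N (\<Sum>d\<in>UNIV. cscale (X$c$d) (Eb c d)))"
    by (rule N_sum[OF NN])
  also have "\<dots> \<le> (\<Sum>c\<in>UNIV. \<Sum>d\<in>UNIV. N (cscale (X$c$d) (Eb c d)))"
    by (intro sum_mono N_sum[OF NN])
  also have "\<dots> = (\<Sum>c\<in>UNIV. \<Sum>d\<in>UNIV. cmod (X$c$d) * N (Eb c d))"
    by (simp add: N_cs[OF NN])
  also have "\<dots> \<le> (\<Sum>c\<in>UNIV. \<Sum>d\<in>UNIV. norm X * N (Eb c d))"
    by (intro sum_mono mult_right_mono coord_le N_ge[OF NN])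
  finally show ?thesis by (simp add: sum_distrib_left sum_distrib_right mult.commute)
qed

lemma N_scaleR: "is_mat_norm N \<Longrightarrow> N (t *\<^sub>R X) = \<bar>t\<bar> * N X"
  by (simp add: cs_real N_cs)

lemma N_lower:
  assumes NN: "is_mat_norm (N :: 'n::finite mat \<Rightarrow> real)"
  obtains m where "m > 0" "\<And>X. m * norm X \<le> N X"
proof -
  define K where "K = (\<Sum>c\<in>UNIV. \<Sum>d\<in>UNIV. N (Eb c d :: 'n mat))"
  have K0: "0 \<le> K" unfolding K_def by (intro sum_nonneg N_ge[OF NN])
  have lip: "\<bar>N x - N y\<bar> \<le> K * norm (x - y)" for x y
  proof -
    have "N x \<le> N (x - y) + N y" using N_tri[OF NN, of "x - y" y] by simp
    moreover have "N y \<le> N (x - y) + N x" using N_tri[OF NN, of "y - x" x] N_commute[OF NN, of y x] by simp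
    moreover have "N (x - y) \<le> K * norm (x - y)" unfolding K_def by (rule N_upper[OF NN])
    ultimately show ?thesis by linarith
  qed
  have "continuous_on (sphere 0 1) N"
    by (rule lipschitz_on_continuous_on[where L=K], rule lipschitz_onI)
       (use lip K0 in \<open>auto simp: dist_real_def dist_norm\<close>)
  then obtain x0 where x0: "x0 \<in> sphere (0::'n mat) 1" "\<And>y. y \<in> sphere 0 1 \<Longrightarrow> N x0 \<le> N y"
    using continuous_attains_inf[of "sphere (0::'n mat) 1" N] by auto
  have "x0 \<noteq> 0" using x0(1) by auto
  then have m0: "N x0 > 0" using NN unfolding is_mat_norm_def by (metis less_eq_real_def)
  show ?thesis
  proof (rule that[OF m0])
    fix X :: "'n mat"
    show "N x0 * norm X \<le> N X"
    proof (cases "X = 0")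
      case True then show ?thesis by (simp add: N_0[OF NN])
    next
      case False
      define Y where "Y = (1 / norm X) *\<^sub>R X"
      have Y: "Y \<in> sphere 0 1" using False by (simp add: Y_def)
      have "X = norm X *\<^sub>R Y" using False by (simp add: Y_def)
      then have "N X = norm X * N Y" using N_scaleR[OF NN, of "norm X" Y] by simp
      then show ?thesis using x0(2)[OF Y] by (metis mult.commute mult_right_mono norm_ge_zero)
    qed
  qed
qed

lemma M_sum_le:
  assumes MN: "is_map_norm M" and lin: "\<And>i. i \<in> S \<Longrightarrow> mat_linear (F i)"
    and le: "\<And>i. i \<in> S \<Longrightarrow> M (F i) \<le> g i"
  shows "M (\<lambda>A. \<Sum>i\<in>S. F i A) \<le> (\<Sum>i\<in>S. g i)"
  using M_sum[OF MN lin] sum_mono[of S "\<lambda>i. M (F i)" g] le by fastforce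

definition U :: "'n::finite \<Rightarrow> 'n \<Rightarrow> 'n \<Rightarrow> 'n \<Rightarrow> 'n mat \<Rightarrow> 'n mat" where
  "U a b c d = (\<lambda>A. cscale (A$a$b) (Eb c d))"

lemma U_lin: "mat_linear (U a b c d)"
  unfolding mat_linear_def U_def
  by (simp add: cs_add_left cs_mult) (simp add: cscale_def mult.assoc)

lemma lin_decomp:
  assumes T: "mat_linear T"
  shows "T A = (\<Sum>a\<in>UNIV. \<Sum>b\<in>UNIV. \<Sum>c\<in>UNIV. \<Sum>d\<in>UNIV.
                 cscale (T (Eb a b) $ c $ d) (U a b c d A))"
proof -
  have "T A = T (\<Sum>a\<in>UNIV. \<Sum>b\<in>UNIV. cscale (A$a$b) (Eb a b))"
    using mat_decomp[of A] by simp
  also have "\<dots> = (\<Sum>a\<in>UNIV. \<Sum>b\<in>UNIV. cscale (A$a$b) (T (Eb a b)))"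
    by (simp add: ml_sum[OF T] ml_cs[OF T])
  also have "\<dots> = (\<Sum>a\<in>UNIV. \<Sum>b\<in>UNIV. cscale (A$a$b)
                     (\<Sum>c\<in>UNIV. \<Sum>d\<in>UNIV. cscale (T (Eb a b) $ c $ d) (Eb c d)))"
    by (subst (1) mat_decomp[of "T (Eb _ _)"]) (rule refl)
  also have "\<dots> = (\<Sum>a\<in>UNIV. \<Sum>b\<in>UNIV. \<Sum>c\<in>UNIV. \<Sum>d\<in>UNIV.
                 cscale (T (Eb a b) $ c $ d) (U a b c d A))"
    by (simp add: cs_sum_right U_def flip: cs_mult) (simp add: mult.commute)
  finally show ?thesis .
qed

lemma M_bound:
  assumes MN: "is_map_norm M" and T: "mat_linear T"
  shows "M T \<le> (\<Sum>a\<in>UNIV. \<Sum>b\<in>UNIV. \<Sum>c\<in>UNIV. \<Sum>d\<in>UNIV.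
                 cmod (T (Eb a b) $ c $ d) * M (U a b c d))"
proof -
  have eq: "T = (\<lambda>A. \<Sum>a\<in>UNIV. \<Sum>b\<in>UNIV. \<Sum>c\<in>UNIV. \<Sum>d\<in>UNIV.
                 cscale (T (Eb a b) $ c $ d) (U a b c d A))"
    using lin_decomp[OF T] by blast
  have L: "mat_linear (\<lambda>A. cscale (T (Eb a b) $ c $ d) (U a b c d A))" for a b c d
    by (rule ml_csf[OF U_lin])
  show ?thesis
    apply (subst eq)
    apply (rule M_sum_le[OF MN])
     apply (intro ml_sumf L)
    apply (rule M_sum_le[OF MN])
     apply (intro ml_sumf L)
    apply (rule M_sum_le[OF MN])
     apply (intro ml_sumf L)
    apply (rule M_sum_le[OF MN])
     apply (rule L)
    apply (simp add: M_cs[OF MN U_lin])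
    done
qed

lemma N_unique:
  assumes NN: "is_mat_norm N"
    and a: "(\<lambda>j. N (x j - a)) \<longlonglongrightarrow> 0" and b: "(\<lambda>j. N (x j - b)) \<longlonglongrightarrow> 0"
  shows "a = b"
proof -
  have le: "N (a - b) \<le> N (x j - a) + N (x j - b)" for j
    using N_tri2[OF NN, of a b "x j"] N_commute[OF NN, of a "x j"] by simp
  have "(\<lambda>j. N (x j - a) + N (x j - b)) \<longlonglongrightarrow> 0"
    using tendsto_add[OF a b] by simp
  then have "N (a - b) \<le> 0"
    by (rule LIMSEQ_le_const) (use le in auto)
  then have "N (a - b) = 0" using N_ge[OF NN, of "a - b"] by linarith
  then show ?thesis using NN unfolding is_mat_norm_def by simp
qed

theorem mainTheorem7:
  fixes N :: "('n::finite) mat \<Rightarrow> real"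
    and \<phi> \<psi> :: "('n::finite) mat \<Rightarrow> ('n::finite) mat"
    and M :: "(('n::finite) mat \<Rightarrow> ('n::finite) mat) \<Rightarrow> real"
  assumes "is_mat_norm N"
    and "mat_linear \<phi>"
    and "contractive N \<phi>"
    and "\<psi> \<circ> \<psi> = \<psi>"
    and "iterate_limit_point N \<phi> \<psi>"
    and "is_map_norm M"
  shows "(\<lambda>k. M (\<lambda>A. (\<phi> ^^ k) A - (\<phi> ^^ k) (\<psi> A))) \<longlonglongrightarrow> 0"
proof -
  note NN = assms(1) and phil = assms(2) and con = assms(3) and MN = assms(6)
  have idem: "\<psi> (\<psi> A) = \<psi> A" for A using assms(4) by (metis comp_apply)
  obtain r where r: "strict_mono r" and conv: "\<And>A. (\<lambda>j. N ((\<phi> ^^ r j) A - \<psi> A)) \<longlonglongrightarrow> 0"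
    using assms(5) unfolding iterate_limit_point_def by blast
  have pl: "mat_linear (\<phi> ^^ k)" for k by (rule ml_pow[OF phil])
  have psil: "mat_linear \<psi>"
    unfolding mat_linear_def
  proof (intro conjI allI)
    fix A B
    have "(\<lambda>j. N ((\<phi> ^^ r j) (A + B) - (\<psi> A + \<psi> B))) \<longlonglongrightarrow> 0"
    proof (rule squeeze0)
      fix j
      show "0 \<le> N ((\<phi> ^^ r j) (A + B) - (\<psi> A + \<psi> B))" by (rule N_ge[OF NN])
      have "(\<phi> ^^ r j) (A + B) - (\<psi> A + \<psi> B) = ((\<phi> ^^ r j) A - \<psi> A) + ((\<phi> ^^ r j) B - \<psi> B)"
        by (simp add: ml_add[OF pl])
      then show "N ((\<phi> ^^ r j) (A + B) - (\<psi> A + \<psi> B)) \<le> N ((\<phi> ^^ r j) A - \<psi> A) + N ((\<phi> ^^ r j) B - \<psi> B)"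
        using N_tri[OF NN] by metis
    next
      show "(\<lambda>j. N ((\<phi> ^^ r j) A - \<psi> A) + N ((\<phi> ^^ r j) B - \<psi> B)) \<longlonglongrightarrow> 0"
        using tendsto_add[OF conv conv] by simp
    qed
    then show "\<psi> (A + B) = \<psi> A + \<psi> B"
      using N_unique[OF NN conv] by blast
  next
    fix c A
    have "(\<lambda>j. N ((\<phi> ^^ r j) (cscale c A) - cscale c (\<psi> A))) \<longlonglongrightarrow> 0"
    proof -
      have "N ((\<phi> ^^ r j) (cscale c A) - cscale c (\<psi> A)) = cmod c * N ((\<phi> ^^ r j) A - \<psi> A)" for j
        by (simp add: ml_cs[OF pl] N_cs[OF NN] flip: cs_diff_right)
      then show ?thesis using tendsto_mult_right_zero[OF conv, of "cmod c"] by simp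
    qed
    then show "\<psi> (cscale c A) = cscale c (\<psi> A)"
      using N_unique[OF NN conv] by blast
  qed
  define T where "T k = (\<lambda>A. (\<phi> ^^ k) A - (\<phi> ^^ k) (\<psi> A))" for k
  have Tl: "mat_linear (T k)" for k
  proof -
    have "mat_linear ((\<phi> ^^ k) \<circ> \<psi>)" by (rule ml_comp[OF pl psil])
    then show ?thesis unfolding T_def o_def using ml_difff[OF pl] by blast
  qed
  have Tconv: "(\<lambda>k. N (T k A)) \<longlonglongrightarrow> 0" for A
  proof -
    define X where "X = A - \<psi> A"
    define s where "s k = N ((\<phi> ^^ k) X)" for k
    have Ts: "N (T k A) = s k" for k unfolding T_def s_def X_def by (simp add: ml_diff[OF pl])
    have "decseq s" unfolding decseq_Suc_iff s_def
      using con unfolding contractive_def by simp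
    moreover have "\<forall>i. 0 \<le> s i" unfolding s_def using N_ge[OF NN] by simp
    ultimately obtain L where L: "s \<longlonglongrightarrow> L" using decseq_convergent by blast
    have "(s \<circ> r) \<longlonglongrightarrow> 0"
    proof (rule squeeze0)
      fix j
      show "0 \<le> (s \<circ> r) j" unfolding s_def using N_ge[OF NN] by simp
      have "(s \<circ> r) j = N ((\<phi> ^^ r j) A - (\<phi> ^^ r j) (\<psi> A))"
        unfolding s_def X_def by (simp add: ml_diff[OF pl])
      also have "\<dots> \<le> N ((\<phi> ^^ r j) A - \<psi> A) + N (\<psi> (\<psi> A) - (\<phi> ^^ r j) (\<psi> A))"
        using N_tri2[OF NN] idem by metis
      also have "\<dots> = N ((\<phi> ^^ r j) A - \<psi> A) + N ((\<phi> ^^ r j) (\<psi> A) - \<psi> (\<psi> A))"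
        using N_commute[OF NN] by metis
      finally show "(s \<circ> r) j \<le> N ((\<phi> ^^ r j) A - \<psi> A) + N ((\<phi> ^^ r j) (\<psi> A) - \<psi> (\<psi> A))" .
    next
      show "(\<lambda>j. N ((\<phi> ^^ r j) A - \<psi> A) + N ((\<phi> ^^ r j) (\<psi> A) - \<psi> (\<psi> A))) \<longlonglongrightarrow> 0"
        using tendsto_add[OF conv conv] by simp
    qed
    moreover have "(s \<circ> r) \<longlonglongrightarrow> L" by (rule LIMSEQ_subseq_LIMSEQ[OF L r])
    ultimately have "L = 0" using LIMSEQ_unique by blast
    then show ?thesis using L Ts by simp
  qed
  obtain m where m: "m > 0" "\<And>X. m * norm X \<le> N X" using N_lower[OF NN] by blast
  have coordconv: "(\<lambda>k. cmod (T k A $ c $ d)) \<longlonglongrightarrow> 0" for A c d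
  proof (rule squeeze0)
    fix k
    show "0 \<le> cmod (T k A $ c $ d)" by simp
    have "m * cmod (T k A $ c $ d) \<le> N (T k A)"
      using coord_le[of "T k A" c d] m(2)[of "T k A"] m(1)
      by (meson less_eq_real_def mult_left_mono order_trans)
    then show "cmod (T k A $ c $ d) \<le> N (T k A) / m" using m(1) by (simp add: field_simps)
  next
    show "(\<lambda>k. N (T k A) / m) \<longlonglongrightarrow> 0" using tendsto_divide[OF Tconv[of A] tendsto_const[of m]] m(1) by simp
  qed
  have "(\<lambda>k. M (T k)) \<longlonglongrightarrow> 0"
  proof (rule squeeze0)
    fix k
    show "0 \<le> M (T k)" by (rule M_ge[OF MN Tl])
    show "M (T k) \<le> (\<Sum>a\<in>UNIV. \<Sum>b\<in>UNIV. \<Sum>c\<in>UNIV. \<Sum>d\<in>UNIV.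
                 cmod (T k (Eb a b) $ c $ d) * M (U a b c d))"
      by (rule M_bound[OF MN Tl])
  next
    show "(\<lambda>k. \<Sum>a\<in>UNIV. \<Sum>b\<in>UNIV. \<Sum>c\<in>UNIV. \<Sum>d\<in>UNIV.
                 cmod (T k (Eb a b) $ c $ d) * M (U a b c d)) \<longlonglongrightarrow> 0"
      by (intro tendsto_null_sum tendsto_mult_left_zero coordconv)
  qed
  then show ?thesis unfolding T_def .
qed

end
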